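(* For $r>0$ with $r\neq 1$, $0<p<1$, $q=1-p$, and $x\in\{0,1,2,\dots\}$, let $$p_X(x;r,p)=\frac{q^{x}p^{r}}{1+x}\binom{r+x-1}{x}\,{}_2F_1(1,r+x;2+x;q)$$ denote the probability mass function of the $\mathcal{UNB}(r,p)$ distribution. Then $$p_X(x;r,p)=\frac{r}{(r-1)(r+x)p}\Big(\big(2r+x-(r+x)q\big)\,p_X(x;r+1,p)-(r+1)\,p_X(x;r+2,p)\Big).$$
   Context: For real $r>0$, $\binom{r+x-1}{x}=\frac{\Gamma(r+x)}{x!\,\Gamma(r)}$. ${}_2F_1(a,b;c;z)=\sum_{n\ge0}\frac{(a)_n(b)_n}{(c)_n}\frac{z^n}{n!}$ for $|z|<1$, with $(s)_n=s(s+1)\cdots(s+n-1)$, $(s)_0=1$. $\mathcal{UNB}(r,p)$ is the law of $X$ where $N$ is negative binomial with $P(N=n)=\binom{r+n-1}{n}p^rq^n$ and $X\mid N=n$ is uniform on $\{0,\dots,n\}$. *)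

theory Defs
  imports "HOL-Analysis.Analysis"
begin

text \<open>Gauss hypergeometric function 2F1(a,b;c;z) = sum_n (a)_n (b)_n / (c)_n * z^n / n!
  (the series converges for |z| < 1, which is the only range used).\<close>
definition hyp2F1 :: "real \<Rightarrow> real \<Rightarrow> real \<Rightarrow> real \<Rightarrow> real" where
  "hyp2F1 a b c z = (\<Sum>n. pochhammer a n * pochhammer b n / pochhammer c n * z ^ n / fact n)"

text \<open>Generalised binomial coefficient binom(r+x-1, x) = Gamma(r+x) / (x! Gamma(r)) for real r > 0.\<close>
definition nbinom :: "real \<Rightarrow> nat \<Rightarrow> real" where
  "nbinom r x = Gamma (r + real x) / (fact x * Gamma r)"

definition unb_pmf :: "nat \<Rightarrow> real \<Rightarrow> real \<Rightarrow> real" where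
  "unb_pmf x r p = (let q = 1 - p in
     q ^ x * p powr r / (1 + real x) * nbinom r x * hyp2F1 1 (r + real x) (2 + real x) q)"

end

theory Submission
  imports Defs "HOL-Real_Asymp.Real_Asymp"
begin

lemma ratio_summable:
  fixes u \<rho> :: "nat \<Rightarrow> real"
  assumes nn: "\<And>n. u n \<ge> 0" and rec: "\<And>n. u (Suc n) = \<rho> n * u n"
    and lim: "\<rho> \<longlonglongrightarrow> c" and c: "c < 1"
  shows "summable u"
proof -
  define d where "d = (1 + c) / 2"
  have "d < 1" "c < d" using c by (auto simp: d_def)
  then have "eventually (\<lambda>n. \<rho> n < d) sequentially" using lim order_tendstoD(2) by blast
  then obtain N where N: "\<And>n. n \<ge> N \<Longrightarrow> \<rho> n < d" by (auto simp: eventually_sequentially)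
  show ?thesis
  proof (rule summable_ratio_test[of d N])
    show "d < 1" by fact
    fix n assume "n \<ge> N"
    then have "\<rho> n * u n \<le> d * u n" using N[of n] nn[of n] by (intro mult_right_mono) auto
    then show "norm (u (Suc n)) \<le> d * norm (u n)" using nn[of n] nn[of "Suc n"] rec[of n] by simp
  qed
qed

lemma Gamma_plus1_pos: "(z::real) > 0 \<Longrightarrow> Gamma (z + 1) = z * Gamma z"
  by (rule Gamma_plus1) (auto simp: nonpos_Ints_def)

theorem theorem2:
  fixes r p :: real and x :: nat
  assumes "r > 0" and "r \<noteq> 1" and "0 < p" and "p < 1"
  shows "unb_pmf x r p =
    r / ((r - 1) * (r + real x) * p) *
      ((2 * r + real x - (r + real x) * (1 - p)) * unb_pmf x (r + 1) p
        - (r + 1) * unb_pmf x (r + 2) p)"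
proof -
  define q where "q = 1 - p"
  have q0: "q > 0" and q1: "q < 1" using assms by (auto simp: q_def)
  define a where "a = r + real x"
  have a0: "a > 0" using assms by (simp add: a_def)
  define b where "b k = pochhammer a k * q ^ k / pochhammer (2 + real x) k" for k
  have pp: "pochhammer (2 + real x) k > 0" for k by (intro pochhammer_pos) auto
  have pa: "pochhammer a k > 0" for k using a0 by (intro pochhammer_pos) auto
  have bnn: "b k \<ge> 0" for k using pp[of k] pa[of k] q0 unfolding b_def by auto
  have bS: "b (Suc k) = (q * (a + k) / (2 + real x + k)) * b k" for k
    using pp[of k] unfolding b_def by (simp add: pochhammer_rec' field_simps)
  define g1 where "g1 k = b k * (a + k)" for k
  define g2 where "g2 k = b k * (a + k) * (a + k + 1)" for k
  have sb: "summable b"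
  proof (rule ratio_summable[where \<rho> = "\<lambda>k. q * (a + k) / (2 + real x + k)"])
    show "b k \<ge> 0" for k by (rule bnn)
    show "b (Suc k) = q * (a + k) / (2 + real x + k) * b k" for k by (rule bS)
    show "(\<lambda>k. q * (a + real k) / (2 + real x + real k)) \<longlonglongrightarrow> q" by real_asymp
  qed (fact q1)
  have sg1: "summable g1"
  proof (rule ratio_summable[where \<rho> = "\<lambda>k. q * (a + k) / (2 + real x + k) * ((a + k + 1) / (a + k))"])
    show "g1 k \<ge> 0" for k using bnn[of k] a0 by (simp add: g1_def)
    show "g1 (Suc k) = q * (a + k) / (2 + real x + k) * ((a + k + 1) / (a + k)) * g1 k" for k
    proof -
      have alg: "\<And>A D B::real. A > 0 \<Longrightarrow> D > 0 \<Longrightarrow> q * A / D * B * (A + 1) = q * A / D * ((A + 1) / A) * (B * A)"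
        by (simp add: field_simps)
      have "g1 (Suc k) = q * (a + k) / (2 + real x + k) * b k * (a + k + 1)"
        unfolding g1_def bS by (simp add: add_ac)
      also have "\<dots> = q * (a + k) / (2 + real x + k) * ((a + k + 1) / (a + k)) * (b k * (a + k))"
        using alg[of "a + k" "2 + real x + k" "b k"] a0 by (simp add: add_ac)
      finally show ?thesis unfolding g1_def by simp
    qed
    show "(\<lambda>k. q * (a + real k) / (2 + real x + real k) * ((a + k + 1) / (a + k))) \<longlonglongrightarrow> q" by real_asymp
  qed (fact q1)
  have sg2: "summable g2"
  proof (rule ratio_summable[where \<rho> = "\<lambda>k. q * (a + k) / (2 + real x + k) * ((a + k + 2) / (a + k))"])
    show "g2 k \<ge> 0" for k using bnn[of k] a0 by (simp add: g2_def)
    show "g2 (Suc k) = q * (a + k) / (2 + real x + k) * ((a + k + 2) / (a + k)) * g2 k" for k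
    proof -
      have alg: "\<And>A D B::real. A > 0 \<Longrightarrow> D > 0 \<Longrightarrow> q * A / D * B * (A + 1) * (A + 2) = q * A / D * ((A + 2) / A) * (B * A * (A + 1))"
        by (simp add: field_simps)
      have "g2 (Suc k) = q * (a + k) / (2 + real x + k) * b k * (a + k + 1) * (a + k + 1 + 1)"
        unfolding g2_def bS by (simp add: add_ac)
      also have "\<dots> = q * (a + k) / (2 + real x + k) * ((a + k + 2) / (a + k)) * (b k * (a + k) * (a + k + 1))"
        using alg[of "a + k" "2 + real x + k" "b k"] a0 by (simp add: add_ac)
      finally show ?thesis unfolding g2_def by simp
    qed
    show "(\<lambda>k. q * (a + real k) / (2 + real x + real k) * ((a + k + 2) / (a + k))) \<longlonglongrightarrow> q" by real_asymp
  qed (fact q1)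
  define f where "f k = real k * (real x + k + 1) * b k" for k
  have f0: "f \<longlonglongrightarrow> 0"
  proof (rule tendsto_sandwich[of "\<lambda>_. 0" _ _ g2])
    show "eventually (\<lambda>k. 0 \<le> f k) sequentially" using bnn by (auto simp: f_def)
    show "eventually (\<lambda>k. f k \<le> g2 k) sequentially"
    proof (intro always_eventually allI)
      fix k
      have "real k * (real x + k + 1) \<le> (a + k) * (a + k + 1)"
        using assms by (intro mult_mono) (auto simp: a_def)
      then show "f k \<le> g2 k" using bnn[of k] unfolding f_def g2_def
        by (metis mult.commute mult.left_commute mult_right_mono)
    qed
    show "g2 \<longlonglongrightarrow> 0" using sg2 by (rule summable_LIMSEQ_zero)
  qed auto
  have tel: "(\<lambda>k. f (Suc k) - f k) sums 0" using telescope_sums[OF f0] by (simp add: f_def)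
  have fd: "f (Suc k) - f k = b k * ((2*r + real x - a*q) * (a + k) - p * ((a + k) * (a + k + 1)) - (r - 1) * a)" for k
  proof -
    have "f (Suc k) = (k + 1) * q * (a + k) * b k"
      using pp[of k] unfolding f_def bS by (simp add: field_simps)
    then show ?thesis unfolding f_def q_def a_def by (simp add: algebra_simps)
  qed
  have comb: "(\<lambda>k. (2*r + real x - a*q) * g1 k - p * g2 k - (r - 1) * a * b k) sums
     ((2*r + real x - a*q) * suminf g1 - p * suminf g2 - (r - 1) * a * suminf b)"
    by (intro sums_diff sums_mult summable_sums sb sg1 sg2)
  have "(\<lambda>k. (2*r + real x - a*q) * g1 k - p * g2 k - (r - 1) * a * b k) = (\<lambda>k. f (Suc k) - f k)"
    by (rule ext) (simp add: fd g1_def g2_def algebra_simps)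
  with comb tel have key: "(2*r + real x - a*q) * suminf g1 - p * suminf g2 - (r - 1) * a * suminf b = 0"
    using sums_unique2 by metis
  have H0: "hyp2F1 1 (r + real x) (2 + real x) q = suminf b"
    unfolding hyp2F1_def b_def a_def by (simp add: pochhammer_fact[symmetric])
  have e1: "pochhammer (a + 1) k = pochhammer a k * (a + k) / a" for k
    using pochhammer_rec[of a k] pochhammer_rec'[of a k] a0 by (simp add: field_simps)
  have e2: "pochhammer (a + 2) k = pochhammer a k * ((a + k) * (a + k + 1)) / (a * (a + 1))" for k
  proof -
    have e2': "pochhammer (a + 1 + 1) k = pochhammer (a + 1) k * (a + 1 + k) / (a + 1)"
      using pochhammer_rec[of "a+1" k] pochhammer_rec'[of "a+1" k] a0 by (simp add: field_simps)
    have "pochhammer (a + 2) k = pochhammer (a + 1) k * (a + 1 + k) / (a + 1)"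
      using e2' by (simp add: add.assoc)
    then show ?thesis unfolding e1 using a0 by (simp add: field_simps)
  qed
  have pf: "pochhammer 1 k = fact k" for k by (simp add: pochhammer_fact)
  have fnz: "(fact k :: real) \<noteq> 0" for k by simp
  have ppnz: "pochhammer (2 + real x) k \<noteq> 0" for k using pp[of k] by simp
  have H0: "hyp2F1 1 (r + real x) (2 + real x) q = suminf b"
  proof -
    have "(\<lambda>n. pochhammer 1 n * pochhammer a n / pochhammer (2 + real x) n * q ^ n / fact n) = b"
      by (rule ext) (simp add: pf b_def fnz)
    then show ?thesis unfolding hyp2F1_def a_def by simp
  qed
  have H1: "hyp2F1 1 (r + 1 + real x) (2 + real x) q = suminf g1 / a"
  proof -
    have "(\<lambda>n. pochhammer 1 n * pochhammer (a + 1) n / pochhammer (2 + real x) n * q ^ n / fact n) = (\<lambda>k. g1 k / a)"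
      by (rule ext) (simp add: pf b_def g1_def fnz e1 mult_ac)
    then have "hyp2F1 1 (r + 1 + real x) (2 + real x) q = (\<Sum>k. g1 k / a)"
      unfolding hyp2F1_def a_def by (simp add: add_ac)
    also have "\<dots> = suminf g1 / a" using sg1 by (simp add: suminf_divide)
    finally show ?thesis .
  qed
  have H2: "hyp2F1 1 (r + 2 + real x) (2 + real x) q = suminf g2 / (a * (a + 1))"
  proof -
    have "(\<lambda>n. pochhammer 1 n * pochhammer (a + 2) n / pochhammer (2 + real x) n * q ^ n / fact n) = (\<lambda>k. g2 k / (a * (a + 1)))"
      by (rule ext) (simp add: pf b_def g2_def fnz e2 mult_ac)
    then have "hyp2F1 1 (r + 2 + real x) (2 + real x) q = (\<Sum>k. g2 k / (a * (a + 1)))"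
      unfolding hyp2F1_def a_def by (simp add: add_ac)
    also have "\<dots> = suminf g2 / (a * (a + 1))" using sg2 by (simp add: suminf_divide)
    finally show ?thesis .
  qed
  have N1: "nbinom (r + 1) x = nbinom r x * a / r"
    using assms Gamma_plus1_pos[of r] Gamma_plus1_pos[of "r + real x"]
    unfolding nbinom_def a_def by (simp add: field_simps add_ac)
  have N2: "nbinom (r + 2) x = nbinom r x * a * (a + 1) / (r * (r + 1))"
  proof -
    have "nbinom (r + 2) x = nbinom (r + 1) x * (a + 1) / (r + 1)"
      using assms Gamma_plus1_pos[of "r+1"] Gamma_plus1_pos[of "r + 1 + real x"]
      unfolding nbinom_def a_def by (simp add: field_simps add_ac)
    also have "\<dots> = nbinom r x * a / r * (a + 1) / (r + 1)" by (simp add: N1)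
    finally show ?thesis by simp
  qed
  have P1: "p powr (r + 1) = p powr r * p" using assms by (simp add: powr_add)
  have P2: "p powr (r + 2) = p powr r * p * p" using assms by (simp add: powr_add power2_eq_square)
  have rm1: "r - 1 \<noteq> 0" using assms by simp
  have S0: "suminf b = ((2*r + real x - a*q) * suminf g1 - p * suminf g2) / ((r - 1) * a)"
    using key rm1 a0 by (simp add: field_simps)
  have ux: "1 + real x \<noteq> 0" by simp
  have nz: "r + 1 \<noteq> 0" "1 + r \<noteq> 0" "a + 1 \<noteq> 0" "1 + a \<noteq> 0" "p \<noteq> 0" "r \<noteq> 0" "a \<noteq> 0"
    using assms a0 by auto
  have NB: "nbinom r x > 0" unfolding nbinom_def using assms by (simp add: add_pos_nonneg)
  have alg: "\<And>Q P X B A S1 S2::real. X \<noteq> 0 \<Longrightarrow>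
     Q * P / X * B * ((A*S1 - p*S2)/((r-1)*a)) = r / ((r-1)*a*p) * (A * (Q * (P*p) / X * (B*a/r) * (S1/a))
       - (r+1) * (Q*(P*p*p)/X * (B*a*(a+1)/(r*(r+1))) * (S2/(a*(a+1)))))"
  proof -
    fix Q P X B A S1 S2 :: real
    assume X: "X \<noteq> 0"
    define K where "K = Q * P / X * B"
    have e1: "Q * (P*p) / X * (B*a/r) * (S1/a) = K * p * S1 / r"
      unfolding K_def using nz X by (simp add: field_simps)
    have e2: "Q*(P*p*p)/X * (B*a*(a+1)/(r*(r+1))) * (S2/(a*(a+1))) = K * p * p * S2 / (r*(r+1))"
    proof -
      have c: "\<And>D R B' S::real. D \<noteq> 0 \<Longrightarrow> B' * D / R * (S / D) = B' * S / R" by simp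
      have "B*a*(a+1)/(r*(r+1)) * (S2/(a*(a+1))) = B * S2 / (r*(r+1))"
        using c[of "a*(a+1)" B "r*(r+1)" S2] nz by (simp add: mult.assoc)
      then have "Q*(P*p*p)/X * (B*a*(a+1)/(r*(r+1))) * (S2/(a*(a+1))) = Q*(P*p*p)/X * (B * S2 / (r*(r+1)))"
        by (simp only: mult.assoc)
      also have "\<dots> = K * p * p * S2 / (r*(r+1))" unfolding K_def using nz X by (simp add: field_simps)
      finally show ?thesis .
    qed
    have e3: "K * ((A*S1 - p*S2)/((r-1)*a)) = r / ((r-1)*a*p) * (A * (K * p * S1 / r) - (r+1) * (K * p * p * S2 / (r*(r+1))))"
    proof -
      have c0: "\<And>R1 Y::real. R1 \<noteq> 0 \<Longrightarrow> R1 * (Y / (r * R1)) = Y / r"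
        using nz by (simp add: field_simps)
      have c2: "(r+1) * (K * p * p * S2 / (r*(r+1))) = K * p * p * S2 / r"
        using nz by (intro c0) auto
      have "r / ((r-1)*a*p) * (A * (K * p * S1 / r) - (r+1) * (K * p * p * S2 / (r*(r+1))))
          = r / ((r-1)*a*p) * ((K * p / r) * (A * S1 - p * S2))"
        unfolding c2 using nz by (simp add: field_simps)
      also have "\<dots> = K * ((A*S1 - p*S2)/((r-1)*a))"
        using nz rm1 by (simp add: field_simps)
      finally show ?thesis by simp
    qed
    show "Q * P / X * B * ((A*S1 - p*S2)/((r-1)*a)) = r / ((r-1)*a*p) * (A * (Q * (P*p) / X * (B*a/r) * (S1/a))
       - (r+1) * (Q*(P*p*p)/X * (B*a*(a+1)/(r*(r+1))) * (S2/(a*(a+1)))))"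
      unfolding e1 e2 using e3 by (simp add: K_def)
  qed
  show ?thesis
    unfolding unb_pmf_def Let_def H0[unfolded q_def] H1[unfolded q_def] H2[unfolded q_def]
    unfolding a_def[symmetric] q_def[symmetric] N1 N2 P1 P2 S0
    by (rule alg) (rule ux)
qed

end
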